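(* Let $\mathbf{A}\in\{0,1\}^{m\times n}$ be the bi-adjacency matrix of a $(2,d,\epsilon)$-expander with $\epsilon\le 1/4$. Let $\mathbf{x},\mathbf{x}'\in\mathbb{R}^n$ satisfy $\mathbf{A}\mathbf{x}=\mathbf{A}\mathbf{x}'$ and $\|\mathbf{x}'\|_1\le\|\mathbf{x}\|_1$. Let $S=\{s\}$ where $s$ is an index of a largest-in-magnitude entry of $\mathbf{x}$. Then $$\|\mathbf{x}'-\mathbf{x}\|_1\le f(\epsilon)\,\|\mathbf{x}_{S^c}\|_1,\qquad f(\epsilon)=\frac{2(1+2\epsilon)}{1-2\epsilon}.$$
   Context: A bipartite graph $G(X,Y,H)$ has vertex classes $X$ (left) and $Y$ (right) and edge set $H\subset X\times Y$. Its bi-adjacency matrix is the $|Y|\times|X|$ $0/1$ matrix whose column $j$ corresponds to left vertex $j$, row $i$ to right vertex $i$, with entry $1$ iff adjacent. A left $d$-regular bipartite graph (every left vertex has degree $d$) is a $(\phi,d,\epsilon)$-expander if every $\Phi\subset X$ with $|\Phi|\le\phi$ satisfies $|N(\Phi)|\ge(1-\epsilon)d|\Phi|$, where $N(\Phi)$ is the set of neighbours of $\Phi$. For $S\subset\{1,\dots,n\}$, $\mathbf{x}_S\in\mathbb{R}^n$ agrees with $\mathbf{x}$ on $S$ and is $0$ elsewhere; $S^c$ is the complement. *)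

theory Defs
  imports Complex_Main
begin

text \<open>Matrices are m x n real matrices given as functions A i j with row index
  i < m (right vertices Y = {0..<m}) and column index j < n (left vertices
  X = {0..<n}); vectors in R^n are functions on {0..<n}.\<close>

definition zero_one_matrix :: "nat \<Rightarrow> nat \<Rightarrow> (nat \<Rightarrow> nat \<Rightarrow> real) \<Rightarrow> bool" where
  "zero_one_matrix m n A \<longleftrightarrow> (\<forall>i<m. \<forall>j<n. A i j = 0 \<or> A i j = 1)"

definition nbhd :: "nat \<Rightarrow> (nat \<Rightarrow> nat \<Rightarrow> real) \<Rightarrow> nat set \<Rightarrow> nat set" where
  "nbhd m A \<Phi> = {i. i < m \<and> (\<exists>j\<in>\<Phi>. A i j = 1)}"

definition left_regular :: "nat \<Rightarrow> nat \<Rightarrow> (nat \<Rightarrow> nat \<Rightarrow> real) \<Rightarrow> nat \<Rightarrow> bool" where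
  "left_regular m n A d \<longleftrightarrow> (\<forall>j<n. card (nbhd m A {j}) = d)"

definition expander :: "nat \<Rightarrow> nat \<Rightarrow> (nat \<Rightarrow> nat \<Rightarrow> real) \<Rightarrow> nat \<Rightarrow> nat \<Rightarrow> real \<Rightarrow> bool" where
  "expander m n A \<phi> d \<epsilon> \<longleftrightarrow> zero_one_matrix m n A \<and> left_regular m n A d \<and>
     (\<forall>\<Phi>. \<Phi> \<subseteq> {0..<n} \<and> card \<Phi> \<le> \<phi> \<longrightarrow>
        real (card (nbhd m A \<Phi>)) \<ge> (1 - \<epsilon>) * real d * real (card \<Phi>))"

definition mat_vec :: "nat \<Rightarrow> (nat \<Rightarrow> nat \<Rightarrow> real) \<Rightarrow> (nat \<Rightarrow> real) \<Rightarrow> nat \<Rightarrow> real" where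
  "mat_vec n A x i = (\<Sum>j<n. A i j * x j)"

definition norm1 :: "nat \<Rightarrow> (nat \<Rightarrow> real) \<Rightarrow> real" where
  "norm1 n x = (\<Sum>j<n. \<bar>x j\<bar>)"

definition restrict_vec :: "(nat \<Rightarrow> real) \<Rightarrow> nat set \<Rightarrow> nat \<Rightarrow> real" where
  "restrict_vec x S j = (if j \<in> S then x j else 0)"

end

theory Submission
  imports Defs
begin

lemma nbhd_single: "nbhd m A {j} = {i. i < m \<and> A i j = 1}"
  by (auto simp: nbhd_def)

lemma nbhd_pair: "nbhd m A {j,k} = nbhd m A {j} \<union> nbhd m A {k}"
  by (auto simp: nbhd_def)

lemma kernel_bound:
  fixes A :: "nat \<Rightarrow> nat \<Rightarrow> real" and e :: "nat \<Rightarrow> real"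
  assumes zo: "zero_one_matrix m n A"
    and reg: "left_regular m n A d"
    and ker: "\<forall>i<m. (\<Sum>k<n. A i k * e k) = 0"
    and j: "j < n"
  shows "real d * \<bar>e j\<bar> \<le> (\<Sum>k\<in>{..<n}-{j}. real (card (nbhd m A {j} \<inter> nbhd m A {k})) * \<bar>e k\<bar>)"
proof -
  let ?N = "nbhd m A {j}"
  have finN: "finite ?N" by (simp add: nbhd_def)
  have cardN: "card ?N = d" using reg j by (simp add: left_regular_def)
  have row: "\<bar>e j\<bar> \<le> (\<Sum>k\<in>{..<n}-{j}. A i k * \<bar>e k\<bar>)" if i: "i \<in> ?N" for i
  proof -
    have im: "i < m" and Aij: "A i j = 1" using i by (auto simp: nbhd_def)
    have "(\<Sum>k<n. A i k * e k) = A i j * e j + (\<Sum>k\<in>{..<n}-{j}. A i k * e k)"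
      using j by (simp add: sum.remove)
    hence "e j = - (\<Sum>k\<in>{..<n}-{j}. A i k * e k)" using ker im Aij by simp
    hence "\<bar>e j\<bar> = \<bar>\<Sum>k\<in>{..<n}-{j}. A i k * e k\<bar>" by simp
    also have "\<dots> \<le> (\<Sum>k\<in>{..<n}-{j}. \<bar>A i k * e k\<bar>)" by (rule sum_abs)
    also have "\<dots> = (\<Sum>k\<in>{..<n}-{j}. A i k * \<bar>e k\<bar>)"
    proof (rule sum.cong)
      fix k assume "k \<in> {..<n}-{j}"
      hence "A i k = 0 \<or> A i k = 1" using zo im by (auto simp: zero_one_matrix_def)
      thus "\<bar>A i k * e k\<bar> = A i k * \<bar>e k\<bar>" by auto
    qed simp
    finally show ?thesis .
  qed
  have "real d * \<bar>e j\<bar> = (\<Sum>i\<in>?N. \<bar>e j\<bar>)" using cardN by simp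
  also have "\<dots> \<le> (\<Sum>i\<in>?N. \<Sum>k\<in>{..<n}-{j}. A i k * \<bar>e k\<bar>)"
    by (rule sum_mono) (rule row)
  also have "\<dots> = (\<Sum>k\<in>{..<n}-{j}. \<Sum>i\<in>?N. A i k * \<bar>e k\<bar>)" by (rule sum.swap)
  also have "\<dots> = (\<Sum>k\<in>{..<n}-{j}. real (card (?N \<inter> nbhd m A {k})) * \<bar>e k\<bar>)"
  proof (rule sum.cong)
    fix k assume k: "k \<in> {..<n}-{j}"
    have "(\<Sum>i\<in>?N. A i k * \<bar>e k\<bar>) = (\<Sum>i\<in>?N. (if i \<in> nbhd m A {k} then 1 else 0) * \<bar>e k\<bar>)"
    proof (rule sum.cong)
      fix i assume i: "i \<in> ?N"
      hence im: "i < m" by (simp add: nbhd_def)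
      hence "A i k = 0 \<or> A i k = 1" using zo k by (auto simp: zero_one_matrix_def)
      thus "A i k * \<bar>e k\<bar> = (if i \<in> nbhd m A {k} then 1 else 0) * \<bar>e k\<bar>"
        using im by (auto simp: nbhd_def)
    qed simp
    also have "\<dots> = (\<Sum>i\<in>?N. (if i \<in> nbhd m A {k} then 1 else 0)) * \<bar>e k\<bar>"
      by (simp add: sum_distrib_right)
    also have "(\<Sum>i\<in>?N. (if i \<in> nbhd m A {k} then 1 else 0::real)) = real (card (?N \<inter> nbhd m A {k}))"
      using finN by (simp add: sum.If_cases Int_def)
    finally show "(\<Sum>i\<in>?N. A i k * \<bar>e k\<bar>) = real (card (?N \<inter> nbhd m A {k})) * \<bar>e k\<bar>" .
  qed simp
  finally show ?thesis .
qed

lemma overlap_bound: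
  assumes ex: "expander m n A 2 d \<epsilon>" and j: "j < n" and k: "k < n" and jk: "j \<noteq> k"
  shows "real (card (nbhd m A {j} \<inter> nbhd m A {k})) \<le> 2 * \<epsilon> * real d"
proof -
  have reg: "left_regular m n A d" using ex by (simp add: expander_def)
  have cj: "card (nbhd m A {j}) = d" and ck: "card (nbhd m A {k}) = d"
    using reg j k by (auto simp: left_regular_def)
  have fin: "finite (nbhd m A {j})" "finite (nbhd m A {k})" by (auto simp: nbhd_def)
  have "real (card (nbhd m A {j,k})) \<ge> (1 - \<epsilon>) * real d * real (card {j,k})"
  proof -
    have "{j,k} \<subseteq> {0..<n}" "card {j,k} \<le> 2" using j k by (auto simp: card_insert_if)
    thus ?thesis using ex unfolding expander_def by blast
  qed
  hence "real (card (nbhd m A {j,k})) \<ge> (1 - \<epsilon>) * real d * 2" using jk by simp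
  moreover have "card (nbhd m A {j,k}) + card (nbhd m A {j} \<inter> nbhd m A {k}) = 2 * d"
    using card_Un_Int[OF fin] cj ck by (simp add: nbhd_pair)
  hence "real (card (nbhd m A {j,k})) + real (card (nbhd m A {j} \<inter> nbhd m A {k})) = 2 * real d"
    by (metis of_nat_add of_nat_mult of_nat_numeral)
  ultimately show ?thesis by (simp add: algebra_simps)
qed

theorem theorem2:
  fixes m n d :: nat and \<epsilon> :: real and A :: "nat \<Rightarrow> nat \<Rightarrow> real"
    and x x' :: "nat \<Rightarrow> real" and s :: nat
  assumes "expander m n A 2 d \<epsilon>"
    and "d \<ge> 1"
    and "\<epsilon> \<le> 1/4"
    and "\<forall>i<m. mat_vec n A x i = mat_vec n A x' i"
    and "norm1 n x' \<le> norm1 n x"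
    and "s < n" and "\<forall>j<n. \<bar>x j\<bar> \<le> \<bar>x s\<bar>"
  shows "norm1 n (\<lambda>j. x' j - x j)
           \<le> (2 * (1 + 2 * \<epsilon>) / (1 - 2 * \<epsilon>)) * norm1 n (restrict_vec x (- {s}))"
proof -
  note ex = assms(1)
  define e where "e = (\<lambda>j. x' j - x j)"
  define R where "R = {..<n} - {s}"
  define T where "T = (\<Sum>k\<in>R. \<bar>e k\<bar>)"
  define \<sigma> where "\<sigma> = (\<Sum>k\<in>R. \<bar>x k\<bar>)"
  have split: "norm1 n f = \<bar>f s\<bar> + (\<Sum>k\<in>R. \<bar>f k\<bar>)" for f
    using assms(6) by (simp add: norm1_def R_def sum.remove)
  have sig: "norm1 n (restrict_vec x (- {s})) = \<sigma>"
    unfolding split \<sigma>_def R_def by (simp add: restrict_vec_def)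
  have ker: "\<forall>i<m. (\<Sum>k<n. A i k * e k) = 0"
  proof (intro allI impI)
    fix i assume "i < m"
    hence "mat_vec n A x i = mat_vec n A x' i" using assms(4) by simp
    thus "(\<Sum>k<n. A i k * e k) = 0"
      by (simp add: mat_vec_def e_def right_diff_distrib sum_subtractf)
  qed
  have zo: "zero_one_matrix m n A" and reg: "left_regular m n A d"
    using ex by (auto simp: expander_def)
  have kb: "real d * \<bar>e s\<bar> \<le> (\<Sum>k\<in>R. real (card (nbhd m A {s} \<inter> nbhd m A {k})) * \<bar>e k\<bar>)"
    using kernel_bound[OF zo reg ker assms(6)] by (simp add: R_def)
  also have "\<dots> \<le> (\<Sum>k\<in>R. 2 * \<epsilon> * real d * \<bar>e k\<bar>)"
    by (rule sum_mono, rule mult_right_mono, rule overlap_bound[OF ex]) (auto simp: R_def assms(6))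
  also have "\<dots> = real d * (2 * \<epsilon> * T)" by (simp add: T_def sum_distrib_left mult_ac)
  finally have es: "\<bar>e s\<bar> \<le> 2 * \<epsilon> * T" using assms(2) by simp
  have "norm1 n x' = \<bar>x' s\<bar> + (\<Sum>k\<in>R. \<bar>x' k\<bar>)" by (rule split)
  moreover have "norm1 n x = \<bar>x s\<bar> + \<sigma>" unfolding \<sigma>_def by (rule split)
  moreover have "(\<Sum>k\<in>R. \<bar>x' k\<bar>) \<ge> T - \<sigma>"
  proof -
    have "(\<Sum>k\<in>R. \<bar>x' k\<bar>) \<ge> (\<Sum>k\<in>R. \<bar>e k\<bar> - \<bar>x k\<bar>)"
      by (rule sum_mono) (simp add: e_def)
    thus ?thesis by (simp add: T_def \<sigma>_def sum_subtractf)
  qed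
  moreover have "\<bar>x' s\<bar> \<ge> \<bar>x s\<bar> - \<bar>e s\<bar>" by (simp add: e_def)
  ultimately have Tb: "T \<le> \<bar>e s\<bar> + 2 * \<sigma>" using assms(5) by linarith
  have lhs: "norm1 n (\<lambda>j. x' j - x j) = \<bar>e s\<bar> + T"
    unfolding split T_def e_def ..
  have sig0: "\<sigma> \<ge> 0" unfolding \<sigma>_def by (simp add: sum_nonneg)
  show ?thesis
  proof (cases "R = {}")
    case True
    hence "T = 0" "\<sigma> = 0" by (simp_all add: T_def \<sigma>_def)
    thus ?thesis using es lhs sig by simp
  next
    case False
    then obtain k where k: "k \<in> R" by blast
    have "real (card (nbhd m A {s} \<inter> nbhd m A {k})) \<le> 2 * \<epsilon> * real d"
      using overlap_bound[OF ex assms(6)] k by (auto simp: R_def)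
    hence "0 \<le> 2 * \<epsilon> * real d" using of_nat_0_le_iff order_trans by blast
    hence eps0: "\<epsilon> \<ge> 0" using assms(2) by (simp add: zero_le_mult_iff)
    define c where "c = 2 * \<epsilon>"
    have c0: "c \<ge> 0" and c1: "c \<le> 1/2" using eps0 assms(3) by (auto simp: c_def)
    have T0: "T \<ge> 0" unfolding T_def by (simp add: sum_nonneg)
    have es': "\<bar>e s\<bar> \<le> c * T" using es by (simp add: c_def)
    have "(1 - c) * (\<bar>e s\<bar> + T) \<le> (1 + c) * (T - \<bar>e s\<bar>)"
      using es' by (simp add: algebra_simps)
    also have "\<dots> \<le> (1 + c) * (2 * \<sigma>)"
      using Tb c0 by (intro mult_left_mono) auto
    finally have "(1 - c) * (\<bar>e s\<bar> + T) \<le> (1 + c) * (2 * \<sigma>)" .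
    hence "\<bar>e s\<bar> + T \<le> (1 + c) * (2 * \<sigma>) / (1 - c)"
      using c1 by (simp add: pos_le_divide_eq mult.commute)
    moreover have "(1 + c) * (2 * \<sigma>) / (1 - c) = (2 * (1 + 2 * \<epsilon>) / (1 - 2 * \<epsilon>)) * \<sigma>"
      by (simp add: c_def)
    ultimately show ?thesis using lhs sig by simp
  qed
qed

end
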